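(* There exist integers $n\ge2$ and $D\ge1$ and a set $X_n=\{\mathbf{x}^0,\ldots,\mathbf{x}^{n-1}\}\subseteq\{0,1\}^D$ of $n$ pairwise distinct vectors such that there is no three-layer Boolean threshold network with layer sizes $D$, $\lceil\log_2 n\rceil$, $D$ that is a perfect autoencoder for $X_n$ (with the second layer as middle layer).
   Context: A Boolean threshold function is a map $\{0,1\}^h\to\{0,1\}$, $\mathbf{u}\mapsto[\mathbf{w}\cdot\mathbf{u}\ge\theta]$ (value $1$ iff $\mathbf{w}\cdot\mathbf{u}\ge\theta$) with $\mathbf{w}\in\mathbb{Z}^h,\theta\in\mathbb{Z}$. A three-layer Boolean threshold network with layer sizes $D,d,D$ consists of maps $\mathbf{f}:\{0,1\}^D\to\{0,1\}^d$ and $\mathbf{g}:\{0,1\}^d\to\{0,1\}^D$ each of whose coordinates is a Boolean threshold function, computing $\mathbf{x}\mapsto\mathbf{g}(\mathbf{f}(\mathbf{x}))$. It is a perfect autoencoder for $X_n$ if $\mathbf{g}(\mathbf{f}(\mathbf{x}^i))=\mathbf{x}^i$ for all $i$. *)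

theory Defs
  imports Complex_Main
begin

definition threshold_fun :: "nat \<Rightarrow> (bool list \<Rightarrow> bool) \<Rightarrow> bool" where
  "threshold_fun h \<phi> \<longleftrightarrow>
     (\<exists>(w :: int list) (\<theta> :: int). length w = h \<and>
        (\<forall>u. length u = h \<longrightarrow>
           (\<phi> u \<longleftrightarrow> (\<Sum>i<h. w ! i * (if u ! i then 1 else 0)) \<ge> \<theta>)))"

definition net_apply :: "nat \<Rightarrow> nat \<Rightarrow> (nat \<Rightarrow> bool list \<Rightarrow> bool) \<Rightarrow> (nat \<Rightarrow> bool list \<Rightarrow> bool)
    \<Rightarrow> bool list \<Rightarrow> bool list" where
  "net_apply D d f g x = map (\<lambda>j. g j (map (\<lambda>i. f i x) [0..<d])) [0..<D]"

definition perfect_autoencoder_exists :: "nat \<Rightarrow> nat \<Rightarrow> bool list set \<Rightarrow> bool" where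
  "perfect_autoencoder_exists D d X \<longleftrightarrow>
     (\<exists>f g. (\<forall>i<d. threshold_fun D (f i)) \<and> (\<forall>j<D. threshold_fun d (g j)) \<and>
            (\<forall>x\<in>X. net_apply D d f g x = x))"

end

theory Submission
  imports Defs
begin

lemma thr2_not_xor:
  assumes "threshold_fun 2 \<phi>"
  shows "\<not> (\<phi> [False,False] = \<phi> [True,True] \<and> \<phi> [True,False] = \<phi> [False,True]
            \<and> \<phi> [False,False] \<noteq> \<phi> [True,False])"
proof
  assume H: "\<phi> [False,False] = \<phi> [True,True] \<and> \<phi> [True,False] = \<phi> [False,True]
            \<and> \<phi> [False,False] \<noteq> \<phi> [True,False]"
  from assms obtain w \<theta> where lw: "length (w::int list) = 2" and
    E: "\<And>u. length u = 2 \<Longrightarrow> (\<phi> u \<longleftrightarrow> (\<Sum>i<2. w ! i * (if u ! i then 1 else 0)) \<ge> (\<theta>::int))"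
    unfolding threshold_fun_def by blast
  have e00: "\<phi> [False,False] \<longleftrightarrow> 0 \<ge> \<theta>" using E[of "[False,False]"] by (simp add: numeral_2_eq_2)
  have e11: "\<phi> [True,True] \<longleftrightarrow> w!0 + w!1 \<ge> \<theta>" using E[of "[True,True]"] by (simp add: numeral_2_eq_2)
  have e10: "\<phi> [True,False] \<longleftrightarrow> w!0 \<ge> \<theta>" using E[of "[True,False]"] by (simp add: numeral_2_eq_2)
  have e01: "\<phi> [False,True] \<longleftrightarrow> w!1 \<ge> \<theta>" using E[of "[False,True]"] by (simp add: numeral_2_eq_2)
  show False using H e00 e11 e10 e01 by (cases "\<phi> [False,False]") auto
qed

theorem corollary17:
  shows "\<exists>(n::nat) (D::nat) (xs :: bool list list).
           n \<ge> 2 \<and> D \<ge> 1 \<and> length xs = n \<and> distinct xs \<and>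
           (\<forall>x\<in>set xs. length x = D) \<and>
           \<not> perfect_autoencoder_exists D (nat \<lceil>log 2 (real n)\<rceil>) (set xs)"
proof -
  define xs where "xs = [[False,False,False],[False,True,True],[True,False,True],[True,True,False]]"
  have lg: "nat \<lceil>log 2 (real 4)\<rceil> = 2"
  proof -
    have "log 2 (real 4) = log 2 ((2::real)^2)" by simp
    also have "\<dots> = 2" by (subst log_nat_power) simp_all
    finally have "log 2 (real 4) = 2" .
    then show ?thesis by simp
  qed
  have "\<not> perfect_autoencoder_exists 3 2 (set xs)"
  proof
    assume "perfect_autoencoder_exists 3 2 (set xs)"
    then obtain f g where tg: "\<forall>j<3. threshold_fun 2 (g j)" and
      ok: "\<forall>x\<in>set xs. net_apply 3 2 f g x = x"
      unfolding perfect_autoencoder_exists_def by blast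
    define c where "c x = [f 0 x, f 1 x]" for x
    have gx: "g j (c x) = x ! j" if "x \<in> set xs" "j < 3" for x j
    proof -
      have "net_apply 3 2 f g x = x" using ok that by blast
      then have "map (\<lambda>j. g j (c x)) [0..<3] = x"
        by (simp add: net_apply_def c_def numeral_2_eq_2 upt_rec)
      then show ?thesis using that by (metis diff_zero length_map length_upt nth_map_upt add_0)
    qed
    have injc: "inj_on c (set xs)"
    proof
      fix x y assume xy: "x \<in> set xs" "y \<in> set xs" "c x = c y"
      have "length x = 3" "length y = 3" using xy(1,2) by (auto simp: xs_def)
      moreover have "x ! j = y ! j" if "j < 3" for j using gx[of x j] gx[of y j] xy that by simp
      ultimately show "x = y" by (intro nth_equalityI) auto
    qed
    define S where "S = {[False,False],[False,True],[True,False],[True,True::bool]}"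
    have sub: "c ` set xs \<subseteq> S" by (auto simp: c_def S_def)
    have "card (c ` set xs) = 4" using injc by (simp add: card_image xs_def)
    moreover have "card S = 4" by (simp add: S_def)
    ultimately have eq: "c ` set xs = S" using sub by (simp add: card_subset_eq S_def)
    have pre: "\<exists>x\<in>set xs. c x = p" if "p \<in> S" for p using eq that by force
    obtain a where a: "a \<in> set xs" "c a = [False,False]" using pre[of "[False,False]"] by (auto simp: S_def)
    obtain b where b: "b \<in> set xs" "c b = [False,True]" using pre[of "[False,True]"] by (auto simp: S_def)
    obtain d where d: "d \<in> set xs" "c d = [True,False]" using pre[of "[True,False]"] by (auto simp: S_def)
    obtain e where e: "e \<in> set xs" "c e = [True,True]" using pre[of "[True,True]"] by (auto simp: S_def)
    have dist: "a \<noteq> b" "a \<noteq> d" "a \<noteq> e" "b \<noteq> d" "b \<noteq> e" "d \<noteq> e"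
      using a b d e by auto
    have N: "\<not> (g j [False,False] = g j [True,True] \<and> g j [True,False] = g j [False,True]
            \<and> g j [False,False] \<noteq> g j [True,False])" if "j < 3" for j
      using thr2_not_xor tg that by blast
    have N0: "\<not> (a!0 = e!0 \<and> d!0 = b!0 \<and> a!0 \<noteq> d!0)" using N[of 0] gx[OF a(1), of 0] gx[OF b(1), of 0] gx[OF d(1), of 0] gx[OF e(1), of 0] a(2) b(2) d(2) e(2) by simp
    have N1: "\<not> (a!1 = e!1 \<and> d!1 = b!1 \<and> a!1 \<noteq> d!1)" using N[of 1] gx[OF a(1), of 1] gx[OF b(1), of 1] gx[OF d(1), of 1] gx[OF e(1), of 1] a(2) b(2) d(2) e(2) by simp
    have N2: "\<not> (a!2 = e!2 \<and> d!2 = b!2 \<and> a!2 \<noteq> d!2)" using N[of 2] gx[OF a(1), of 2] gx[OF b(1), of 2] gx[OF d(1), of 2] gx[OF e(1), of 2] a(2) b(2) d(2) e(2) by simp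
    have A: "a \<in> set xs" "b \<in> set xs" "d \<in> set xs" "e \<in> set xs" using a b d e by auto
    show False using A dist N0 N1 N2 unfolding xs_def
      apply (simp only: list.set insert_iff empty_iff simp_thms)
      apply (elim disjE)
      apply (simp_all only: nth_Cons_0 nth_Cons_Suc One_nat_def numeral_2_eq_2 simp_thms list.inject)
      done
  qed
  then have P: "\<not> perfect_autoencoder_exists 3 (nat \<lceil>log 2 (real 4)\<rceil>) (set xs)"
    by (subst lg)
  have "(4::nat) \<ge> 2 \<and> (3::nat) \<ge> 1 \<and> length xs = 4 \<and> distinct xs \<and>
           (\<forall>x\<in>set xs. length x = 3)" by (simp add: xs_def)
  with P show ?thesis by blast
qed

end
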